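(* For every $n\ge2$, $$E\big[U^{(n)}\tau^{(n)}\big]=\frac{n+1}{n-1}\big(H_{n,1}^2-H_{n,2}\big)-\frac{2n}{n-1}\big(H_{n,1}-1\big).$$
   Context: Fix $n\ge 2$. A Yule tree with speciation rate 1 on $n$ tips: start with a single lineage; each lineage independently splits into two at rate 1; the process is stopped just before the $n$-th speciation event, so the tree has $n$ tips and $n-1$ speciation (internal) nodes, numbered $1,\dots,n-1$ chronologically from the root. For $i=1,\dots,n$ let $T_i$ be the length of the time interval during which there are exactly $i$ lineages; the $T_i$ are independent, $T_i\sim\mathrm{Exp}(i)$ (rate $i$), the $k$-th speciation occurs at time $T_1+\dots+T_k$, and at each speciation the splitting lineage is uniformly chosen among current lineages, independently of the $T_i$. The tree height is $U^{(n)}=T_1+\dots+T_n$. Choose an unordered pair of distinct tips uniformly at random and let $\kappa_n\in\{1,\dots,n-1\}$ be the index of the speciation event at which their lineages split; the coalescent time of the pair is $\tau^{(n)}=T_{\kappa_n+1}+\dots+T_n$. $H_{n,r}=\sum_{i=1}^n i^{-r}$. *)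

theory Defs
  imports "HOL-Probability.Probability"
begin

definition H :: "nat \<Rightarrow> nat \<Rightarrow> real" where
  "H n r = (\<Sum>i=1..n. 1 / (real i) ^ r)"

text \<open>Tree topology of the Yule process after k speciation events.
  The tree is encoded as the list of its current lineages; each lineage is
  represented by the set of (chronological indices of) speciation events on
  its path from the root.\<close>
fun yule_shape :: "nat \<Rightarrow> nat set list pmf" where
  "yule_shape 0 = return_pmf [{}]"
| "yule_shape (Suc k) =
     do { L \<leftarrow> yule_shape k;
          j \<leftarrow> pmf_of_set {..<length L};
          let c = insert (Suc k) (L ! j);
          return_pmf (L[j := c] @ [c]) }"

text \<open>kappa_n: choose an unordered pair of distinct tips of the n-tip tree
  uniformly; the index of the speciation event at which their lineages split
  is the latest speciation event common to both ancestries.\<close>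
definition kappa_pmf :: "nat \<Rightarrow> nat pmf" where
  "kappa_pmf n =
     do { L \<leftarrow> yule_shape (n - 1);
          p \<leftarrow> pmf_of_set {(a, b). a < b \<and> b < length L};
          return_pmf (Max (L ! fst p \<inter> L ! snd p)) }"

definition T_measure :: "nat \<Rightarrow> (nat \<Rightarrow> real) measure" where
  "T_measure n = (\<Pi>\<^sub>M i\<in>{1..n}. density lborel (exponential_density (real i)))"

definition yule_space :: "nat \<Rightarrow> ((nat \<Rightarrow> real) \<times> nat) measure" where
  "yule_space n = T_measure n \<Otimes>\<^sub>M measure_pmf (kappa_pmf n)"

definition height :: "nat \<Rightarrow> (nat \<Rightarrow> real) \<Rightarrow> real" where
  "height n T = (\<Sum>i=1..n. T i)"

definition coal_time :: "nat \<Rightarrow> (nat \<Rightarrow> real) \<Rightarrow> nat \<Rightarrow> real" where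
  "coal_time n T k = (\<Sum>i\<in>{k<..n}. T i)"

end

theory Submission
  imports Defs
begin


lemma aux: "(a::real) + 1 \<noteq> 0 \<Longrightarrow> h * ((a+1+1)*(a+1+2)/X) = (a+3)/(a+1) * (h*((a+1)*(a+2)/X))"
proof -
  assume a: "a + 1 \<noteq> 0"
  have q: "(a+3)/(a+1)*(a+1) = a+3" using a by simp
  have "(a+3)/(a+1) * (h*((a+1)*(a+2)/X)) = ((a+3)/(a+1)*(a+1)) * (h*(a+2)/X)" by (simp add: ac_simps)
  also have "\<dots> = h * ((a+1+1)*(a+1+2)/X)" unfolding q by (simp add: algebra_simps)
  finally show ?thesis by (rule sym)
qed

lemma pairs_sum:
  fixes f :: "nat \<times> nat \<Rightarrow> real"
  shows "(\<Sum>p\<in>{(a,b). a<b \<and> b<m}. f p) = (\<Sum>b<m. \<Sum>a<b. f (a,b))"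
proof (induction m)
  case 0 then show ?case by simp
next
  case (Suc m)
  have eq: "{(a,b). a<b \<and> b<Suc m} = {(a,b). a<b \<and> b<m} \<union> (\<lambda>a. (a,m)) ` {..<m}" by auto
  have fin: "finite {(a,b). a<b \<and> b<m}"
    by (rule finite_subset[of _ "{..<m} \<times> {..<m}"]) auto
  have "(\<Sum>p\<in>{(a,b). a<b \<and> b<Suc m}. f p) = (\<Sum>p\<in>{(a,b). a<b \<and> b<m}. f p) + (\<Sum>p\<in>(\<lambda>a. (a,m)) ` {..<m}. f p)"
    unfolding eq by (rule sum.union_disjoint) (use fin in auto)
  also have "(\<Sum>p\<in>(\<lambda>a. (a,m)) ` {..<m}. f p) = (\<Sum>a<m. f (a,m))"
    by (subst sum.reindex) (auto simp: inj_on_def)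
  finally show ?case using Suc by simp
qed

lemma sum_real_lt: "(\<Sum>b<m. real b) = real m * (real m - 1) / 2"
  by (induction m) (auto simp: field_simps)

lemma card_pairs: "real (card {(a,b). a<b \<and> b<(m::nat)}) = real m * (real m - 1) / 2"
proof -
  have "real (card {(a,b). a<b \<and> b<(m::nat)}) = (\<Sum>p\<in>{(a,b). a<b \<and> b<m}. 1)" by simp
  also have "\<dots> = (\<Sum>b<m. real b)" by (subst pairs_sum) simp
  finally show ?thesis using sum_real_lt by simp
qed

lemma sym_sum:
  fixes G :: "nat \<Rightarrow> nat \<Rightarrow> real"
  assumes "\<And>a b. G a b = G b a"
  shows "(\<Sum>j<m. \<Sum>a\<in>{..<m}-{j}. G a j) = 2 * (\<Sum>b<m. \<Sum>a<b. G a b)"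
proof (induction m)
  case 0 then show ?case by simp
next
  case (Suc m)
  have "(\<Sum>j<Suc m. \<Sum>a\<in>{..<Suc m}-{j}. G a j) = (\<Sum>j<m. \<Sum>a\<in>{..<Suc m}-{j}. G a j) + (\<Sum>a\<in>{..<m}. G a m)"
    by (simp add: lessThan_Suc_eq_insert_0[symmetric]) (simp add: lessThan_Suc)
  also have "(\<Sum>j<m. \<Sum>a\<in>{..<Suc m}-{j}. G a j) = (\<Sum>j<m. (\<Sum>a\<in>{..<m}-{j}. G a j) + G m j)"
  proof (rule sum.cong[OF refl])
    fix j assume "j \<in> {..<m}"
    then have "{..<Suc m}-{j} = insert m ({..<m}-{j})" by auto
    then show "(\<Sum>a\<in>{..<Suc m}-{j}. G a j) = (\<Sum>a\<in>{..<m}-{j}. G a j) + G m j" by simp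
  qed
  also have "\<dots> = (\<Sum>j<m. \<Sum>a\<in>{..<m}-{j}. G a j) + (\<Sum>j<m. G j m)"
    by (simp add: sum.distrib assms)
  finally show ?case using Suc by simp
qed

definition Sh :: "(nat \<Rightarrow> real) \<Rightarrow> nat set list \<Rightarrow> real" where
  "Sh h L = (\<Sum>b<length L. \<Sum>a<b. h (Max (L!a \<inter> L!b)))"

lemma Sh_step:
  assumes len: "length L = Suc k" and sub: "\<forall>x\<in>set L. x \<subseteq> {1..k}" and j: "j < Suc k"
  shows "Sh h (L[j := insert (Suc k) (L!j)] @ [insert (Suc k) (L!j)])
       = Sh h L + h (Suc k) + (\<Sum>a\<in>{..<Suc k}-{j}. h (Max (L!a \<inter> L!j)))"
proof -
  define c where "c = insert (Suc k) (L!j)"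
  define L' where "L' = L[j := c] @ [c]"
  have fin: "\<And>a. a < Suc k \<Longrightarrow> L!a \<subseteq> {1..k}" using sub len by (metis nth_mem)
  have notin: "\<And>a. a < Suc k \<Longrightarrow> Suc k \<notin> L!a" using fin by fastforce
  have nthL': "\<And>a. a < Suc k \<Longrightarrow> L'!a = (if a = j then c else L!a)"
    unfolding L'_def using len by (auto simp: nth_append)
  have lastL': "L'!(Suc k) = c" unfolding L'_def using len by (simp add: nth_append)
  have lenL': "length L' = Suc (Suc k)" unfolding L'_def using len by simp
  have A: "\<And>a b. a < b \<Longrightarrow> b < Suc k \<Longrightarrow> L'!a \<inter> L'!b = L!a \<inter> L!b"
    using notin by (auto simp: nthL' c_def)
  have B: "\<And>a. a < Suc k \<Longrightarrow> a \<noteq> j \<Longrightarrow> L'!a \<inter> L'!(Suc k) = L!a \<inter> L!j"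
    using notin by (auto simp: nthL' lastL' c_def)
  have Cm: "Max c = Suc k"
    unfolding c_def using fin[OF j] by (intro Max_eqI) (auto intro: finite_subset)
  have "Sh h L' = (\<Sum>b<Suc k. \<Sum>a<b. h (Max (L'!a \<inter> L'!b))) + (\<Sum>a<Suc k. h (Max (L'!a \<inter> L'!(Suc k))))"
    unfolding Sh_def lenL' by simp
  also have "(\<Sum>b<Suc k. \<Sum>a<b. h (Max (L'!a \<inter> L'!b))) = Sh h L"
    unfolding Sh_def len by (intro sum.cong refl) (simp add: A)
  also have "(\<Sum>a<Suc k. h (Max (L'!a \<inter> L'!(Suc k)))) = h (Max (L'!j \<inter> L'!(Suc k))) + (\<Sum>a\<in>{..<Suc k}-{j}. h (Max (L'!a \<inter> L'!(Suc k))))"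
    using j by (subst sum.remove[of _ j]) auto
  also have "(\<Sum>a\<in>{..<Suc k}-{j}. h (Max (L'!a \<inter> L'!(Suc k)))) = (\<Sum>a\<in>{..<Suc k}-{j}. h (Max (L!a \<inter> L!j)))"
    by (intro sum.cong refl) (simp add: B)
  also have "h (Max (L'!j \<inter> L'!(Suc k))) = h (Suc k)" using j by (simp add: nthL' lastL' Cm)
  finally show ?thesis unfolding L'_def c_def by simp
qed

lemma Sh_sum_step:
  assumes len: "length L = Suc k" and sub: "\<forall>x\<in>set L. x \<subseteq> {1..k}"
  shows "(\<Sum>j<Suc k. Sh h (L[j := insert (Suc k) (L!j)] @ [insert (Suc k) (L!j)]))
       = real (Suc k) * (Sh h L + h (Suc k)) + 2 * Sh h L"
proof -
  have "(\<Sum>j<Suc k. Sh h (L[j := insert (Suc k) (L!j)] @ [insert (Suc k) (L!j)]))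
      = (\<Sum>j<Suc k. (Sh h L + h (Suc k)) + (\<Sum>a\<in>{..<Suc k}-{j}. h (Max (L!a \<inter> L!j))))"
    by (intro sum.cong refl) (simp add: Sh_step[OF len sub])
  also have "\<dots> = real (Suc k) * (Sh h L + h (Suc k)) + (\<Sum>j<Suc k. \<Sum>a\<in>{..<Suc k}-{j}. h (Max (L!a \<inter> L!j)))"
    by (simp add: sum.distrib)
  also have "(\<Sum>j<Suc k. \<Sum>a\<in>{..<Suc k}-{j}. h (Max (L!a \<inter> L!j))) = 2 * Sh h L"
    unfolding Sh_def len by (rule sym_sum) (simp add: Int_commute)
  finally show ?thesis .
qed

lemma yule_shape_props:
  "finite (set_pmf (yule_shape k)) \<and> (\<forall>L\<in>set_pmf (yule_shape k). length L = Suc k \<and> (\<forall>x\<in>set L. x \<subseteq> {1..k}))"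
proof (induction k)
  case 0
  then show ?case by simp
next
  case (Suc k)
  have ne: "\<And>L. L \<in> set_pmf (yule_shape k) \<Longrightarrow> {..<length L} \<noteq> {}" using Suc by auto
  have eq: "set_pmf (yule_shape (Suc k)) = (\<Union>L\<in>set_pmf (yule_shape k). (\<lambda>j. L[j := insert (Suc k) (L!j)] @ [insert (Suc k) (L!j)]) ` {..<length L})"
    using ne by (auto simp: Let_def set_bind_pmf)
  show ?case
  proof (intro conjI ballI)
    show "finite (set_pmf (yule_shape (Suc k)))" unfolding eq using Suc by auto
  next
    fix L' assume "L' \<in> set_pmf (yule_shape (Suc k))"
    then obtain L j where L: "L \<in> set_pmf (yule_shape k)" "j < length L"
       and L': "L' = L[j := insert (Suc k) (L!j)] @ [insert (Suc k) (L!j)]" unfolding eq by auto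
    have "L ! j \<subseteq> {1..k}" using Suc L by auto
    then have c: "insert (Suc k) (L!j) \<subseteq> {1..Suc k}" by auto
      show "length L' = Suc (Suc k)" using L L' Suc by auto
  next
    fix L' x assume "L' \<in> set_pmf (yule_shape (Suc k))" "x \<in> set L'"
    then obtain L j where L: "L \<in> set_pmf (yule_shape k)" "j < length L"
       and L': "L' = L[j := insert (Suc k) (L!j)] @ [insert (Suc k) (L!j)]" unfolding eq by auto
    have "L ! j \<subseteq> {1..k}" using Suc L by auto
    then have c: "insert (Suc k) (L!j) \<subseteq> {1..Suc k}" by auto
        from \<open>x \<in> set L'\<close> have "x \<in> insert (insert (Suc k) (L!j)) (set L)" unfolding L' using set_update_subset_insert by fastforce
        then show "x \<subseteq> {1..Suc k}" using c Suc L by fastforce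
  qed
qed

lemma E_Sh_step:
  "measure_pmf.expectation (yule_shape (Suc k)) (Sh h) =
   measure_pmf.expectation (yule_shape k) (\<lambda>L. h (Suc k) + (real k + 3) / (real k + 1) * Sh h L)"
proof -
  let ?A = "set_pmf (yule_shape k)"
  have finA: "finite ?A" using yule_shape_props by blast
  have props: "\<And>L. L \<in> ?A \<Longrightarrow> length L = Suc k \<and> (\<forall>x\<in>set L. x \<subseteq> {1..k})"
    using yule_shape_props by blast
  define f where "f = (\<lambda>L. pmf_of_set {..<length L} \<bind> (\<lambda>j. return_pmf (L[j := insert (Suc k) (L!j)] @ [insert (Suc k) (L!j)])))"
  have ys: "yule_shape (Suc k) = yule_shape k \<bind> f" unfolding f_def by (simp add: Let_def)
  have inner: "measure_pmf.expectation (f L) (Sh h) = h (Suc k) + (real k + 3) / (real k + 1) * Sh h L"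
    if L: "L \<in> ?A" for L
  proof -
    have len: "length L = Suc k" and sub: "\<forall>x\<in>set L. x \<subseteq> {1..k}" using props[OF L] by auto
    have "measure_pmf.expectation (f L) (Sh h) = (\<Sum>j<Suc k. Sh h (L[j := insert (Suc k) (L!j)] @ [insert (Suc k) (L!j)]) / real (Suc k))"
      unfolding f_def len by (subst pmf_expectation_bind_pmf_of_set) (auto simp del: sum.lessThan_Suc simp add: divide_inverse mult.commute)
    also have "\<dots> = (\<Sum>j<Suc k. Sh h (L[j := insert (Suc k) (L!j)] @ [insert (Suc k) (L!j)])) / real (Suc k)"
      by (rule sum_divide_distrib[symmetric])
    also have "\<dots> = h (Suc k) + (real k + 3) / (real k + 1) * Sh h L"
      unfolding Sh_sum_step[OF len sub] by (simp add: field_simps)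
    finally show ?thesis .
  qed
  have finf: "\<And>L. L \<in> ?A \<Longrightarrow> finite (set_pmf (f L))" 
      proof -
    fix L assume "L \<in> ?A"
    then have "length L = Suc k" using props by blast
    moreover have "set_pmf (pmf_of_set {..<Suc k}) = {..<Suc k}" by (rule set_pmf_of_set) auto
    ultimately show "finite (set_pmf (f L))" unfolding f_def by (simp add: set_bind_pmf)
  qed
  have "measure_pmf.expectation (yule_shape (Suc k)) (Sh h) = (\<Sum>L\<in>?A. pmf (yule_shape k) L *\<^sub>R measure_pmf.expectation (f L) (Sh h))"
    unfolding ys by (rule pmf_expectation_bind[OF finA finf]) auto
  also have "\<dots> = (\<Sum>L\<in>?A. pmf (yule_shape k) L *\<^sub>R (h (Suc k) + (real k + 3) / (real k + 1) * Sh h L))"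
    by (intro sum.cong refl) (simp add: inner)
  also have "\<dots> = measure_pmf.expectation (yule_shape k) (\<lambda>L. h (Suc k) + (real k + 3) / (real k + 1) * Sh h L)"
    by (rule integral_measure_pmf[OF finA, symmetric]) auto
  finally show ?thesis .
qed

lemma E_Sh:
  "measure_pmf.expectation (yule_shape k) (Sh h) =
     (\<Sum>e=1..k. h e * ((real k + 1) * (real k + 2) / ((real e + 1) * (real e + 2))))"
proof (induction k)
  case 0
  then show ?case by (simp add: Sh_def)
next
  case (Suc k)
  have fin: "finite (set_pmf (yule_shape k))" using yule_shape_props by blast
  have "measure_pmf.expectation (yule_shape (Suc k)) (Sh h) =
     h (Suc k) + (real k + 3) / (real k + 1) * measure_pmf.expectation (yule_shape k) (Sh h)"
  proof -
    have "measure_pmf.expectation (yule_shape k) (\<lambda>L. h (Suc k) + (real k + 3) / (real k + 1) * Sh h L)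
      = measure_pmf.expectation (yule_shape k) (\<lambda>L. h (Suc k)) + measure_pmf.expectation (yule_shape k) (\<lambda>L. (real k + 3) / (real k + 1) * Sh h L)"
      by (rule Bochner_Integration.integral_add) (rule integrable_measure_pmf_finite[OF fin])+
    then show ?thesis unfolding E_Sh_step by simp
  qed
  also have "\<dots> = (\<Sum>e=1..Suc k. h e * ((real (Suc k) + 1) * (real (Suc k) + 2) / ((real e + 1) * (real e + 2))))"
  proof -
    have t: "h e * ((real (Suc k) + 1) * (real (Suc k) + 2) / ((real e + 1) * (real e + 2)))
        = (real k + 3) / (real k + 1) * (h e * ((real k + 1) * (real k + 2) / ((real e + 1) * (real e + 2))))" for e
      using aux[of "real k" "h e" "(real e + 1) * (real e + 2)"] by (simp add: add_ac)
    have "(\<Sum>e=1..Suc k. h e * ((real (Suc k) + 1) * (real (Suc k) + 2) / ((real e + 1) * (real e + 2))))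
       = (\<Sum>e=1..k. h e * ((real (Suc k) + 1) * (real (Suc k) + 2) / ((real e + 1) * (real e + 2))))
         + h (Suc k) * ((real (Suc k) + 1) * (real (Suc k) + 2) / ((real (Suc k) + 1) * (real (Suc k) + 2)))"
      by simp
    also have "\<dots> = (real k + 3) / (real k + 1) * (\<Sum>e=1..k. h e * ((real k + 1) * (real k + 2) / ((real e + 1) * (real e + 2)))) + h (Suc k)"
    proof -
      have one: "(real (Suc k) + 1) * (real (Suc k) + 2) / ((real (Suc k) + 1) * (real (Suc k) + 2)) = 1"
        by (intro divide_self) (simp add: add_pos_pos)
      show ?thesis unfolding t sum_distrib_left one by simp
    qed
    finally show ?thesis unfolding Suc by simp
  qed
  finally show ?case .
qed



abbreviation EM :: "nat \<Rightarrow> real measure" where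
  "EM l \<equiv> density lborel (exponential_density (real l))"

lemma EM_sigma_finite: "sigma_finite_measure (EM l)"
  by (subst sigma_finite_measure.sigma_finite_iff_density_finite[OF sigma_finite_lborel]) auto

lemma EM_product: "product_sigma_finite EM"
  unfolding product_sigma_finite_def using EM_sigma_finite by blast

lemma EM_distributed: "distributed (EM l) lborel (\<lambda>x. x) (exponential_density (real l))"
  unfolding distributed_def by (auto simp: distr_id2)

lemma EM_moment:
  assumes "l > 0"
  shows "integrable (EM l) (\<lambda>x. x ^ p)" "integral\<^sup>L (EM l) (\<lambda>x. x ^ p) = fact p / real l ^ p"
proof -
  interpret prob_space "EM l" using assms by (intro prob_space_exponential_density) simp
  show "integrable (EM l) (\<lambda>x. x ^ p)"
    using erlang_ith_moment_integrable[OF _ EM_distributed] assms by simp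
  show "integral\<^sup>L (EM l) (\<lambda>x. x ^ p) = fact p / real l ^ p"
    using erlang_ith_moment[OF _ EM_distributed, of p] assms by simp
qed

lemma T_prod:
  assumes i: "i \<in> {1..n}" and j: "j \<in> {1..n}"
  shows "integrable (T_measure n) (\<lambda>T. T i * T j)"
    "integral\<^sup>L (T_measure n) (\<lambda>T. T i * T j) = (if i = j then 2 else 1) / (real i * real j)"
proof -
  interpret product_sigma_finite EM by (rule EM_product)
  define c where "c l = (if l = i then 1 else 0) + (if l = j then 1 else (0::nat))" for l
  have pw: "(\<Prod>l\<in>{1..n}. (T l) ^ c l) = T i * T j" for T :: "nat \<Rightarrow> real"
  proof -
    have "(\<Prod>l\<in>{1..n}. (T l) ^ c l) = (\<Prod>l\<in>{1..n}. (if l = i then T l else 1) * (if l = j then T l else 1))"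
      by (intro prod.cong refl) (auto simp: c_def)
    also have "\<dots> = T i * T j" using i j by (simp add: prod.distrib)
    finally show ?thesis .
  qed
  have int: "\<And>l. l \<in> {1..n} \<Longrightarrow> integrable (EM l) (\<lambda>x. x ^ c l)" using EM_moment by auto
  have "integrable (T_measure n) (\<lambda>T. \<Prod>l\<in>{1..n}. (T l) ^ c l)"
    unfolding T_measure_def by (rule product_integrable_prod) (auto intro: int)
  then show "integrable (T_measure n) (\<lambda>T. T i * T j)" by (simp only: pw)
  have "integral\<^sup>L (T_measure n) (\<lambda>T. \<Prod>l\<in>{1..n}. (T l) ^ c l) = (\<Prod>l\<in>{1..n}. integral\<^sup>L (EM l) (\<lambda>x. x ^ c l))"
    unfolding T_measure_def by (rule product_integral_prod) (auto intro: int)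
  also have "\<dots> = (\<Prod>l\<in>{1..n}. fact (c l) / real l ^ c l)"
    by (intro prod.cong refl) (auto simp: EM_moment)
  also have "\<dots> = (\<Prod>l\<in>{1..n}. (if l = i then 1 / real l else 1) * (if l = j then 1 / real l else 1) * (if l = i then (if i = j then 2 else 1) else 1))"
    by (intro prod.cong refl) (auto simp: c_def power2_eq_square)
  also have "\<dots> = (if i = j then 2 else 1) / (real i * real j)"
    using i j by (simp add: prod.distrib)
  finally show "integral\<^sup>L (T_measure n) (\<lambda>T. T i * T j) = (if i = j then 2 else 1) / (real i * real j)"
    by (simp only: pw)
qed

lemma pair_mult:
  fixes a :: "'a \<Rightarrow> real" and b :: "'b \<Rightarrow> real"
  assumes s1: "sigma_finite_measure M1" and s2: "sigma_finite_measure M2"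
    and ia: "integrable M1 a" and ib: "integrable M2 b"
  shows "integrable (M1 \<Otimes>\<^sub>M M2) (\<lambda>\<omega>. a (fst \<omega>) * b (snd \<omega>))"
    "(\<integral>\<omega>. a (fst \<omega>) * b (snd \<omega>) \<partial>(M1 \<Otimes>\<^sub>M M2)) = integral\<^sup>L M1 a * integral\<^sup>L M2 b"
proof -
  interpret pair_sigma_finite M1 M2 using s1 s2 by (simp add: pair_sigma_finite_def)
  have [measurable]: "a \<in> borel_measurable M1" "b \<in> borel_measurable M2" using ia ib by auto
  show int: "integrable (M1 \<Otimes>\<^sub>M M2) (\<lambda>\<omega>. a (fst \<omega>) * b (snd \<omega>))"
  proof (rule Fubini_integrable)
    show "(\<lambda>\<omega>. a (fst \<omega>) * b (snd \<omega>)) \<in> borel_measurable (M1 \<Otimes>\<^sub>M M2)" by measurable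
    have "(\<lambda>x. \<integral>y. norm (a (fst (x, y)) * b (snd (x, y))) \<partial>M2) = (\<lambda>x. norm (a x) * (\<integral>y. norm (b y) \<partial>M2))"
      by (simp add: abs_mult)
    moreover have "integrable M1 (\<lambda>x. norm (a x) * (\<integral>y. norm (b y) \<partial>M2))"
      using ia by (intro integrable_mult_left integrable_norm)
    ultimately show "integrable M1 (\<lambda>x. \<integral>y. norm (a (fst (x, y)) * b (snd (x, y))) \<partial>M2)" by simp
    show "AE x in M1. integrable M2 (\<lambda>y. a (fst (x, y)) * b (snd (x, y)))"
      using ib by (auto intro: integrable_mult_right)
  qed
  have "(\<integral>\<omega>. a (fst \<omega>) * b (snd \<omega>) \<partial>(M1 \<Otimes>\<^sub>M M2)) = (\<integral>x. (\<integral>y. a (fst (x,y)) * b (snd (x,y)) \<partial>M2) \<partial>M1)"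
    by (rule integral_fst'[OF int, symmetric])
  also have "\<dots> = (\<integral>x. a x * integral\<^sup>L M2 b \<partial>M1)" by simp
  also have "\<dots> = integral\<^sup>L M1 a * integral\<^sup>L M2 b" by simp
  finally show "(\<integral>\<omega>. a (fst \<omega>) * b (snd \<omega>) \<partial>(M1 \<Otimes>\<^sub>M M2)) = integral\<^sup>L M1 a * integral\<^sup>L M2 b" .
qed



lemma E_kappa:
  assumes n: "n \<ge> 2"
  shows "measure_pmf.expectation (kappa_pmf n) g =
    (\<Sum>e=1..n-1. g e * ((real n) * (real n + 1) / ((real e + 1) * (real e + 2)))) / (real n * (real n - 1) / 2)"
proof -
  let ?A = "set_pmf (yule_shape (n-1))"
  let ?P = "\<lambda>m. {(a,b). a<b \<and> b<(m::nat)}"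
  let ?C = "real n * (real n - 1) / 2"
  have finA: "finite ?A" using yule_shape_props by blast
  have props: "\<And>L. L \<in> ?A \<Longrightarrow> length L = n \<and> (\<forall>x\<in>set L. x \<subseteq> {1..n-1})"
    using yule_shape_props[of "n-1"] n by auto
  have finP: "finite (?P m)" for m by (rule finite_subset[of _ "{..<m} \<times> {..<m}"]) auto
  have "(0,1) \<in> ?P n" using n by auto
  then have neP: "?P n \<noteq> {}" by blast
  define f :: "nat set list \<Rightarrow> nat pmf" where "f = (\<lambda>L. pmf_of_set (?P (length L)) \<bind> (\<lambda>p. return_pmf (Max (L ! fst p \<inter> L ! snd p))))"
  have kp: "kappa_pmf n = bind_pmf (yule_shape (n-1)) f" unfolding kappa_pmf_def f_def ..
  have finf: "finite (set_pmf (f L))" if "L \<in> ?A" for L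
  proof -
    have "length L = n" using props that by blast
    moreover have "set_pmf (pmf_of_set (?P n)) = ?P n" by (rule set_pmf_of_set[OF neP finP])
    ultimately show ?thesis unfolding f_def using finP by (simp add: set_bind_pmf)
  qed
  have inner: "measure_pmf.expectation (f L) g = Sh g L / ?C" if L: "L \<in> ?A" for L
  proof -
    have len: "length L = n" using props L by blast
    have "measure_pmf.expectation (f L) g = (\<Sum>p\<in>?P n. g (Max (L ! fst p \<inter> L ! snd p)) / real (card (?P n)))"
      unfolding f_def len by (subst pmf_expectation_bind_pmf_of_set[OF neP finP]) (auto simp: divide_inverse mult.commute)
    also have "\<dots> = (\<Sum>p\<in>?P n. g (Max (L ! fst p \<inter> L ! snd p))) / real (card (?P n))"
      by (rule sum_divide_distrib[symmetric])
    also have "(\<Sum>p\<in>?P n. g (Max (L ! fst p \<inter> L ! snd p))) = Sh g L"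
      unfolding Sh_def len by (subst pairs_sum) simp
    also have "real (card (?P n)) = ?C" by (rule card_pairs)
    finally show ?thesis .
  qed
  have "measure_pmf.expectation (kappa_pmf n) g = (\<Sum>L\<in>?A. pmf (yule_shape (n-1)) L *\<^sub>R measure_pmf.expectation (f L) g)"
    unfolding kp by (rule pmf_expectation_bind[OF finA finf]) auto
  also have "\<dots> = (\<Sum>L\<in>?A. pmf (yule_shape (n-1)) L *\<^sub>R (Sh g L / ?C))"
    by (intro sum.cong refl) (simp add: inner)
  also have "\<dots> = measure_pmf.expectation (yule_shape (n-1)) (\<lambda>L. Sh g L / ?C)"
    by (rule integral_measure_pmf[OF finA, symmetric]) auto
  also have "\<dots> = measure_pmf.expectation (yule_shape (n-1)) (Sh g) / ?C"
    by (rule integral_divide_zero)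
  also have "measure_pmf.expectation (yule_shape (n-1)) (Sh g) = 
     (\<Sum>e=1..n-1. g e * ((real n) * (real n + 1) / ((real e + 1) * (real e + 2))))"
    unfolding E_Sh using n by (simp add: of_nat_diff algebra_simps)
  finally show ?thesis .
qed

lemma tel_step: assumes "(x::real) \<ge> 0" shows "1/2 - 1/(x+2) + 1/((x+2)*(x+3)) = 1/2 - 1/(x+1+2)"
proof -
  have a: "x + 2 \<noteq> 0" "x + 3 \<noteq> 0" using assms by linarith+
  have "1/(x+2) = (x+3)/((x+2)*(x+3))" using a by simp
  then have "1/(x+2) - 1/((x+2)*(x+3)) = ((x+3) - 1)/((x+2)*(x+3))" by (simp only: diff_divide_distrib)
  also have "\<dots> = 1/(x+3)" using a by (simp add: add.commute)
  finally show ?thesis by (simp add: add.assoc)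
qed

lemma pk: assumes "(x::real) > 1" "y \<ge> 1" shows "x*(x+1)*((y-1)/(2*(y+1))) / (x*(x-1)/2) = (x+1)/(x-1)*((y-1)/(y+1))"
proof -
  have a: "x \<noteq> 0" "x - 1 \<noteq> 0" "y + 1 \<noteq> 0" using assms by linarith+
  have "x*(x+1)*((y-1)/(2*(y+1))) / (x*(x-1)/2) = (x*(x+1)*(y-1)*2) / (x*(x-1)*(2*(y+1)))"
    by simp
  also have "\<dots> = (x * ((x+1)*(y-1)*2)) / (x * ((x-1)*(2*(y+1))))" by (simp add: mult.assoc)
  also have "\<dots> = ((x+1)*(y-1)*2) / ((x-1)*(2*(y+1)))" by (rule mult_divide_mult_cancel_left[OF a(1)])
  also have "\<dots> = (2 * ((x+1)*(y-1))) / (2 * ((x-1)*(y+1)))" by (simp add: ac_simps)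
  also have "\<dots> = ((x+1)*(y-1)) / ((x-1)*(y+1))" by (rule mult_divide_mult_cancel_left) simp
  also have "\<dots> = (x+1)/(x-1)*((y-1)/(y+1))" by simp
  finally show ?thesis .
qed

lemma telescope: "(\<Sum>e=1..m. 1 / ((real e + 1) * (real e + 2))) = 1/2 - 1 / (real m + 2)"
proof (induction m)
  case 0 then show ?case by simp
next
  case (Suc m)
  have "(\<Sum>e=1..Suc m. 1 / ((real e + 1) * (real e + 2))) = 1/2 - 1 / (real m + 2) + 1 / ((real m + 2) * (real m + 3))"
    using Suc by (simp add: add_ac)
  also have "\<dots> = 1/2 - 1 / (real (Suc m) + 2)" using tel_step[of "real m"] by simp
  finally show ?case .
qed

lemma P_kappa_lt:
  assumes n: "n \<ge> 2" and j: "j \<in> {1..n}"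
  shows "measure_pmf.expectation (kappa_pmf n) (\<lambda>k. if k < j then 1 else 0) =
    (real n + 1) / (real n - 1) * ((real j - 1) / (real j + 1))"
proof -
  have "(\<Sum>e=1..n-1. (if e < j then 1 else 0) * ((real n) * (real n + 1) / ((real e + 1) * (real e + 2))))
      = (\<Sum>e\<in>{e\<in>{1..n-1}. e < j}. (real n) * (real n + 1) * (1 / ((real e + 1) * (real e + 2))))"
    by (subst sum.inter_filter) (auto intro!: sum.cong)
  also have "{e\<in>{1..n-1}. e < j} = {1..j-1}" using j by auto
  also have "(\<Sum>e\<in>{1..j-1}. (real n) * (real n + 1) * (1 / ((real e + 1) * (real e + 2))))
     = (real n) * (real n + 1) * (1/2 - 1 / (real (j-1) + 2))"
    unfolding sum_distrib_left[symmetric] telescope ..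
  finally have S: "(\<Sum>e=1..n-1. (if e < j then 1 else 0) * ((real n) * (real n + 1) / ((real e + 1) * (real e + 2))))
      = (real n) * (real n + 1) * (1/2 - 1 / (real (j-1) + 2))" .
  have "measure_pmf.expectation (kappa_pmf n) (\<lambda>k. if k < j then 1 else 0) = 
     (real n) * (real n + 1) * (1/2 - 1 / (real (j-1) + 2)) / (real n * (real n - 1) / 2)"
    unfolding E_kappa[OF n] S ..
  also have "\<dots> = (real n + 1) / (real n - 1) * ((real j - 1) / (real j + 1))"
  proof -
    have "1/2 - 1 / (real (j-1) + 2) = (real j - 1) / (2 * (real j + 1))"
      using j by (simp add: of_nat_diff field_simps)
    then show ?thesis using pk[of "real n" "real j"] n j by simp
  qed
  finally show ?thesis .
qed



lemma H_Suc: "H (Suc n) r = H n r + 1 / real (Suc n) ^ r"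
  unfolding H_def by simp

lemma fA: fixes u w h :: real assumes "u \<noteq> 0" "w \<noteq> 0" "w = u + 1"
  shows "h - 2 + 2/u + (u-1)/(u*w) = h + 1/u - 2 + 2/w"
proof -
  have "u*w*(h - 2 + 2/u + (u-1)/(u*w)) = u*w*(h + 1/u - 2 + 2/w)"
    using assms(1,2) apply (simp add: field_simps) by (simp add: assms(3) algebra_simps)
  then show ?thesis using assms by simp
qed
lemma fB: fixes u w h :: real assumes "u \<noteq> 0" "w \<noteq> 0" "w = u + 1"
  shows "2 - 2/u - h + (u-1)/(u^2*w) = 2 - 2/w - (h + 1/u^2)"
proof -
  have "u*u*w*(2 - 2/u - h + (u-1)/(u^2*w)) = u*u*w*(2 - 2/w - (h + 1/u^2))"
    using assms(1,2) apply (simp add: field_simps power2_eq_square) by (simp add: assms(3) algebra_simps)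
  then show ?thesis using assms by simp
qed

lemma sumA: "(\<Sum>j=1..n. (real j - 1) / (real j * (real j + 1))) = H n 1 - 2 + 2 / (real n + 1)"
proof (induction n)
  case 0 then show ?case by (simp add: H_def)
next
  case (Suc n)
  have a: "real n + 1 \<noteq> 0" "real n + 2 \<noteq> 0" by linarith+
  have "(\<Sum>j=1..Suc n. (real j - 1) / (real j * (real j + 1))) = H n 1 - 2 + 2 / (real n + 1) + ((real n + 1) - 1) / ((real n + 1) * (real n + 2))"
    using Suc by (simp add: add_ac)
  also have "\<dots> = H n 1 + 1 / (real n + 1) - 2 + 2 / (real n + 2)" by (rule fA) (use a in auto)
  also have "\<dots> = H (Suc n) 1 - 2 + 2 / (real (Suc n) + 1)"
    unfolding H_Suc by (simp add: add_ac)
  finally show ?case .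
qed

lemma sumB: "(\<Sum>j=1..n. (real j - 1) / ((real j)^2 * (real j + 1))) = 2 - 2 / (real n + 1) - H n 2"
proof (induction n)
  case 0 then show ?case by (simp add: H_def)
next
  case (Suc n)
  have a: "real n + 1 \<noteq> 0" "real n + 2 \<noteq> 0" by linarith+
  have "(\<Sum>j=1..Suc n. (real j - 1) / ((real j)^2 * (real j + 1))) = 2 - 2 / (real n + 1) - H n 2 + ((real n + 1) - 1) / ((real n + 1)^2 * (real n + 2))"
    using Suc by (simp add: add_ac)
  also have "\<dots> = 2 - 2 / (real n + 2) - (H n 2 + 1 / (real n + 1)^2)" by (rule fB) (use a in auto)
  also have "\<dots> = 2 - 2 / (real (Suc n) + 1) - H (Suc n) 2"
    unfolding H_Suc by (simp add: add_ac)
  finally show ?case .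
qed



lemma final_alg: fixes u w x h h2 :: real assumes "u \<noteq> 0" "w \<noteq> 0" "u = x + 1" "w = x - 1"
  shows "u/w*(h*(h-2+2/u) + (2 - 2/u - h2)) = u/w*(h^2-h2) - 2*x/w*(h-1)"
proof -
  have "w*(u/w*(h*(h-2+2/u) + (2 - 2/u - h2))) = w*(u/w*(h^2-h2) - 2*x/w*(h-1))"
    using assms(1,2) apply (simp add: field_simps power2_eq_square) by (simp add: assms(3,4) algebra_simps)
  then show ?thesis using assms by simp
qed

lemma alg2: fixes a p c h :: real assumes "a \<noteq> 0" "p \<noteq> 0"
  shows "(h / a + 1 / a^2) * (c * ((a - 1) / p)) = c * (h * ((a - 1) / (a * p)) + (a - 1) / (a^2 * p))"
  using assms by (simp add: field_simps power2_eq_square)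

lemma coal_eq: "coal_time n T k = (\<Sum>j\<in>{1..n}. T j * (if k < j then 1 else 0))"
proof -
  have e: "{k<..n} = {j\<in>{1..n}. k < j}" by auto
  have "(\<Sum>j\<in>{1..n}. T j * (if k < j then 1 else 0)) = (\<Sum>j\<in>{1..n}. if k < j then T j else 0)"
    by (intro sum.cong) auto
  also have "\<dots> = (\<Sum>j\<in>{j\<in>{1..n}. k < j}. T j)" by (rule sum.inter_filter[symmetric]) simp
  finally show ?thesis unfolding coal_time_def e ..
qed

theorem lemmaY4p2:
  fixes n :: nat
  assumes "n \<ge> 2"
  shows "(\<integral>\<omega>. height n (fst \<omega>) * coal_time n (fst \<omega>) (snd \<omega>) \<partial>yule_space n)
         = (real n + 1) / (real n - 1) * ((H n 1)\<^sup>2 - H n 2)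
           - 2 * real n / (real n - 1) * (H n 1 - 1)"
proof -
  let ?K = "measure_pmf (kappa_pmf n)"
  let ?M = "T_measure n"
  define b where "b j k = (if k < j then 1 else (0::real))" for j k :: nat
  have sf1: "sigma_finite_measure ?M"
  proof -
    have "prob_space ?M" unfolding T_measure_def
      by (rule prob_space_PiM) (auto intro: prob_space_exponential_density)
    then show ?thesis by (rule prob_space_imp_sigma_finite)
  qed
  have sf2: "sigma_finite_measure ?K"
    by (rule prob_space_imp_sigma_finite[OF measure_pmf.prob_space_axioms])
  have bint: "integrable ?K (b j)" for j
    by (rule measure_pmf.integrable_const_bound[where B=1]) (auto simp: b_def)
  have pw: "height n (fst \<omega>) * coal_time n (fst \<omega>) (snd \<omega>) =
      (\<Sum>i\<in>{1..n}. \<Sum>j\<in>{1..n}. (fst \<omega> i * fst \<omega> j) * b j (snd \<omega>))" for \<omega>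
    unfolding height_def coal_eq b_def sum_product by (simp add: mult.assoc)
  have term_int: "integrable (yule_space n) (\<lambda>\<omega>. (fst \<omega> i * fst \<omega> j) * b j (snd \<omega>))"
    and term_val: "(\<integral>\<omega>. (fst \<omega> i * fst \<omega> j) * b j (snd \<omega>) \<partial>yule_space n) =
          (if i = j then 2 else 1) / (real i * real j) * measure_pmf.expectation (kappa_pmf n) (b j)"
    if "i \<in> {1..n}" "j \<in> {1..n}" for i j
  proof -
    show "integrable (yule_space n) (\<lambda>\<omega>. (fst \<omega> i * fst \<omega> j) * b j (snd \<omega>))"
      unfolding yule_space_def using pair_mult(1)[OF sf1 sf2 T_prod(1)[OF that] bint] .
    show "(\<integral>\<omega>. (fst \<omega> i * fst \<omega> j) * b j (snd \<omega>) \<partial>yule_space n) =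
          (if i = j then 2 else 1) / (real i * real j) * measure_pmf.expectation (kappa_pmf n) (b j)"
      unfolding yule_space_def pair_mult(2)[OF sf1 sf2 T_prod(1)[OF that] bint] T_prod(2)[OF that] ..
  qed
  have "(\<integral>\<omega>. height n (fst \<omega>) * coal_time n (fst \<omega>) (snd \<omega>) \<partial>yule_space n)
      = (\<integral>\<omega>. (\<Sum>i\<in>{1..n}. \<Sum>j\<in>{1..n}. (fst \<omega> i * fst \<omega> j) * b j (snd \<omega>)) \<partial>yule_space n)"
    unfolding pw ..
  also have "\<dots> = (\<Sum>i\<in>{1..n}. (\<integral>\<omega>. (\<Sum>j\<in>{1..n}. (fst \<omega> i * fst \<omega> j) * b j (snd \<omega>)) \<partial>yule_space n))"
    by (rule Bochner_Integration.integral_sum) (auto intro!: integrable_sum term_int)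
  also have "\<dots> = (\<Sum>i\<in>{1..n}. \<Sum>j\<in>{1..n}. (if i = j then 2 else 1) / (real i * real j) * ((real n + 1) / (real n - 1) * ((real j - 1) / (real j + 1))))"
  proof (intro sum.cong refl)
    fix i assume i: "i \<in> {1..n}"
    have "(\<integral>\<omega>. (\<Sum>j\<in>{1..n}. (fst \<omega> i * fst \<omega> j) * b j (snd \<omega>)) \<partial>yule_space n)
       = (\<Sum>j\<in>{1..n}. (\<integral>\<omega>. (fst \<omega> i * fst \<omega> j) * b j (snd \<omega>) \<partial>yule_space n))"
      by (rule Bochner_Integration.integral_sum) (auto intro!: term_int i)
    also have "\<dots> = (\<Sum>j\<in>{1..n}. (if i = j then 2 else 1) / (real i * real j) * ((real n + 1) / (real n - 1) * ((real j - 1) / (real j + 1))))"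
    proof (intro sum.cong refl)
      fix j assume j: "j \<in> {1..n}"
      have Pj: "measure_pmf.expectation (kappa_pmf n) (b j) = (real n + 1) / (real n - 1) * ((real j - 1) / (real j + 1))"
        unfolding b_def using P_kappa_lt[OF assms j] .
      show "(\<integral>\<omega>. (fst \<omega> i * fst \<omega> j) * b j (snd \<omega>) \<partial>yule_space n) = (if i = j then 2 else 1) / (real i * real j) * ((real n + 1) / (real n - 1) * ((real j - 1) / (real j + 1)))"
        unfolding term_val[OF i j] Pj ..
    qed
    finally show "(\<integral>\<omega>. (\<Sum>j\<in>{1..n}. (fst \<omega> i * fst \<omega> j) * b j (snd \<omega>)) \<partial>yule_space n) =
      (\<Sum>j\<in>{1..n}. (if i = j then 2 else 1) / (real i * real j) * ((real n + 1) / (real n - 1) * ((real j - 1) / (real j + 1))))" .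
  qed
  also have "\<dots> = (\<Sum>j\<in>{1..n}. \<Sum>i\<in>{1..n}. (if i = j then 2 else 1) / (real i * real j) * ((real n + 1) / (real n - 1) * ((real j - 1) / (real j + 1))))"
    by (rule sum.swap)
  also have "\<dots> = (\<Sum>j\<in>{1..n}. (real n + 1) / (real n - 1) * (H n 1 * ((real j - 1) / (real j * (real j + 1))) + (real j - 1) / ((real j)^2 * (real j + 1))))"
  proof (intro sum.cong refl)
    fix j assume j: "j \<in> {1..n}"
    have "(\<Sum>i\<in>{1..n}. (if i = j then 2 else 1) / (real i * real j)) = (\<Sum>i\<in>{1..n}. 1 / real i / real j + (if i = j then 1 / (real j)^2 else 0))"
      by (intro sum.cong refl) (auto simp: power2_eq_square)
    also have "\<dots> = H n 1 / real j + 1 / (real j)^2"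
      using j by (simp add: sum.distrib H_def sum_divide_distrib)
    finally have S: "(\<Sum>i\<in>{1..n}. (if i = j then 2 else 1) / (real i * real j)) = H n 1 / real j + 1 / (real j)^2" .
    have "(\<Sum>i\<in>{1..n}. (if i = j then 2 else 1) / (real i * real j) * ((real n + 1) / (real n - 1) * ((real j - 1) / (real j + 1))))
        = (\<Sum>i\<in>{1..n}. (if i = j then 2 else 1) / (real i * real j)) * ((real n + 1) / (real n - 1) * ((real j - 1) / (real j + 1)))"
      by (rule sum_distrib_right[symmetric])
    also have "\<dots> = (real n + 1) / (real n - 1) * (H n 1 * ((real j - 1) / (real j * (real j + 1))) + (real j - 1) / ((real j)^2 * (real j + 1)))"
      unfolding S by (rule alg2) (use j in auto)
    finally show "(\<Sum>i\<in>{1..n}. (if i = j then 2 else 1) / (real i * real j) * ((real n + 1) / (real n - 1) * ((real j - 1) / (real j + 1))))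
        = (real n + 1) / (real n - 1) * (H n 1 * ((real j - 1) / (real j * (real j + 1))) + (real j - 1) / ((real j)^2 * (real j + 1)))" .
  qed
  also have "\<dots> = (real n + 1) / (real n - 1) * (H n 1 * (\<Sum>j=1..n. (real j - 1) / (real j * (real j + 1))) + (\<Sum>j=1..n. (real j - 1) / ((real j)^2 * (real j + 1))))"
    by (simp only: sum_distrib_left[symmetric] sum.distrib)
  also have "\<dots> = (real n + 1) / (real n - 1) * (H n 1 * (H n 1 - 2 + 2 / (real n + 1)) + (2 - 2 / (real n + 1) - H n 2))"
    unfolding sumA sumB ..
  also have "\<dots> = (real n + 1) / (real n - 1) * ((H n 1)\<^sup>2 - H n 2) - 2 * real n / (real n - 1) * (H n 1 - 1)"
    by (rule final_alg) (use assms in auto)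
  finally show ?thesis .
qed


end
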